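(* Let $r>1$, $K=70$. There exists $n_0$, depending on $r$, such that the following holds. Let $k,\ell,m$ be positive integers, let $n=\ell(k+m)+1$, and let $\kappa=\max\{3k,Kr^4\log n\}$. Suppose $\ell\ge Kr^4\kappa\log n$, $m\ge 6r^2\kappa$ and $n\ge n_0$. Fix $x_0\in R_1\cup\dots\cup R_\ell$ in the $(k,\ell,m)$-superstar and run the Moran process with fitness $r$ on the superstar with initial mutant $x_0$. Then the extinction probability is at least $1/(7Kr^4\kappa)$.
   Context: Logarithms are natural. Moran process: given a directed graph $G$ and fitness $r$, one vertex $x_0$ is a mutant, the rest non-mutants. At each step a vertex $v$ is chosen with probability proportional to fitness (mutants $r$, non-mutants $1$), an out-neighbour $w$ of $v$ is chosen uniformly at random and the state of $v$ is copied to $w$. Extinction: eventually no vertex is a mutant. The $(k,\ell,m)$-superstar has vertex set the disjoint union of reservoirs $R_1,\dots,R_\ell$ of size $m$, vertices $v_{i,j}$ ($i\in[\ell]$, $j\in[k]$), and a centre $v^*$; its edges are, for each $i\in[\ell]$: from $v^*$ to every vertex of $R_i$, from every vertex of $R_i$ to $v_{i,1}$, from $v_{i,j}$ to $v_{i,j+1}$ for $j\in[k-1]$, and from $v_{i,k}$ to $v^*$. *)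

theory Defs
  imports "HOL-Probability.Probability"
begin

text \<open>A directed graph is given by a finite vertex set V and an out-neighbourhood map out.
A state of the Moran process is the set S of mutant vertices.\<close>

definition fitness :: "real \<Rightarrow> 'v set \<Rightarrow> 'v \<Rightarrow> real" where
  "fitness r S v = (if v \<in> S then r else 1)"

definition total_fitness :: "'v set \<Rightarrow> real \<Rightarrow> 'v set \<Rightarrow> real" where
  "total_fitness V r S = (\<Sum>v\<in>V. fitness r S v)"

definition moran_step :: "'v set \<Rightarrow> ('v \<Rightarrow> 'v set) \<Rightarrow> real \<Rightarrow> 'v set \<Rightarrow> 'v set pmf" where
  "moran_step V out r S =
     bind_pmf (embed_pmf (\<lambda>v. if v \<in> V then fitness r S v / total_fitness V r S else 0))
       (\<lambda>v. map_pmf (\<lambda>w. if v \<in> S then insert w S else S - {w}) (pmf_of_set (out v)))"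

definition moran_dist :: "'v set \<Rightarrow> ('v \<Rightarrow> 'v set) \<Rightarrow> real \<Rightarrow> 'v \<Rightarrow> nat \<Rightarrow> 'v set pmf" where
  "moran_dist V out r x0 t = ((\<lambda>p. bind_pmf p (moran_step V out r)) ^^ t) (return_pmf {x0})"

text \<open>Extinction probability: probability that eventually no vertex is a mutant.  Since the
empty state is absorbing, this is the supremum over t of the probability of having no mutant
at time t.\<close>

definition extinction_prob :: "'v set \<Rightarrow> ('v \<Rightarrow> 'v set) \<Rightarrow> real \<Rightarrow> 'v \<Rightarrow> real" where
  "extinction_prob V out r x0 = (SUP t. pmf (moran_dist V out r x0 t) {})"

text \<open>Res i a: the a-th vertex of reservoir R_i (1 \<le> a \<le> m); Path i j: v_{i,j}; Centre: v*.\<close>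

datatype ss_vertex = Res nat nat | Path nat nat | Centre

definition reservoirs :: "nat \<Rightarrow> nat \<Rightarrow> ss_vertex set" where
  "reservoirs l m = {Res i a | i a. i \<in> {1..l} \<and> a \<in> {1..m}}"

definition superstar_V :: "nat \<Rightarrow> nat \<Rightarrow> nat \<Rightarrow> ss_vertex set" where
  "superstar_V k l m = reservoirs l m \<union> {Path i j | i j. i \<in> {1..l} \<and> j \<in> {1..k}} \<union> {Centre}"

fun superstar_out :: "nat \<Rightarrow> nat \<Rightarrow> nat \<Rightarrow> ss_vertex \<Rightarrow> ss_vertex set" where
  "superstar_out k l m Centre = reservoirs l m"
| "superstar_out k l m (Res i a) = {Path i 1}"
| "superstar_out k l m (Path i j) = (if j < k then {Path i (j + 1)} else {Centre})"

end

theory Submission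
  imports Defs "HOL-Probability.Probability"
begin

definition newst :: "'v set \<Rightarrow> 'v \<Rightarrow> 'v \<Rightarrow> 'v set" where
  "newst S v w = (if v \<in> S then insert w S else S - {w})"

definition drift_sum :: "'v set \<Rightarrow> ('v \<Rightarrow> 'v set) \<Rightarrow> real \<Rightarrow> 'v set \<Rightarrow> ('v set \<Rightarrow> real) \<Rightarrow> real" where
  "drift_sum V out r S g = (\<Sum>v\<in>V. fitness r S v / total_fitness V r S * ((\<Sum>w\<in>out v. g (newst S v w)) / card (out v)))"

locale mgraph =
  fixes V :: "'v set" and out :: "'v \<Rightarrow> 'v set" and r :: real
  assumes finV: "finite V" and neV: "V \<noteq> {}"
    and outne: "\<And>v. v \<in> V \<Longrightarrow> out v \<noteq> {}"
    and outfin: "\<And>v. v \<in> V \<Longrightarrow> finite (out v)"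
    and outV: "\<And>v. v \<in> V \<Longrightarrow> out v \<subseteq> V"
    and rpos: "r > 0"
begin

lemma fit_pos: "fitness r S v > 0" using rpos by (simp add: fitness_def)

lemma W_pos: "total_fitness V r S > 0"
  unfolding total_fitness_def using finV neV by (intro sum_pos) (simp_all add: fit_pos)

definition om :: "'v set \<Rightarrow> 'v \<Rightarrow> real" where
  "om S v = (if v \<in> V then fitness r S v / total_fitness V r S else 0)"

lemma om_nonneg: "om S v \<ge> 0"
  using fit_pos[of S v] W_pos[of S] by (simp add: om_def)

lemma om_sum: "(\<Sum>v\<in>V. om S v) = 1"
proof -
  have "(\<Sum>v\<in>V. om S v) = (\<Sum>v\<in>V. fitness r S v) / total_fitness V r S"
    by (simp add: om_def sum_divide_distrib)
  also have "\<dots> = 1" using W_pos[of S] by (simp add: total_fitness_def)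
  finally show ?thesis .
qed

lemma om_prob: "(\<integral>\<^sup>+x. ennreal (om S x) \<partial>count_space UNIV) = 1"
proof -
  have "(\<integral>\<^sup>+x. ennreal (om S x) \<partial>count_space UNIV) = (\<Sum>x\<in>V. ennreal (om S x))"
    by (rule nn_integral_count_space') (auto simp: finV om_def)
  also have "\<dots> = ennreal (\<Sum>x\<in>V. om S x)"
    using om_nonneg by (simp add: sum_ennreal)
  finally show ?thesis using om_sum by simp
qed

lemma step_eq: "moran_step V out r S = bind_pmf (embed_pmf (om S)) (\<lambda>v. map_pmf (newst S v) (pmf_of_set (out v)))"
  unfolding moran_step_def om_def[abs_def] newst_def[abs_def] by (rule refl)

lemma pmf_om: "pmf (embed_pmf (om S)) v = om S v"
  by (rule pmf_embed_pmf[OF om_nonneg om_prob])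

lemma set_om: "set_pmf (embed_pmf (om S)) \<subseteq> V"
proof
  fix x assume "x \<in> set_pmf (embed_pmf (om S))"
  then have "om S x \<noteq> 0" using set_embed_pmf[OF om_nonneg om_prob, of S] by blast
  then show "x \<in> V" by (cases "x \<in> V") (simp_all add: om_def)
qed

lemma newst_sub: "S \<subseteq> V \<Longrightarrow> v \<in> V \<Longrightarrow> w \<in> out v \<Longrightarrow> newst S v w \<subseteq> V"
  using outV by (auto simp: newst_def)

lemma set_step: assumes "S \<subseteq> V" shows "set_pmf (moran_step V out r S) \<subseteq> Pow V"
proof
  fix x assume "x \<in> set_pmf (moran_step V out r S)"
  then obtain v where v: "v \<in> set_pmf (embed_pmf (om S))" and "x \<in> set_pmf (map_pmf (newst S v) (pmf_of_set (out v)))"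
    unfolding step_eq by auto
  moreover have "v \<in> V" using v set_om by auto
  ultimately obtain w where "w \<in> out v" "x = newst S v w"
    using outne outfin by auto
  then show "x \<in> Pow V" using newst_sub[OF assms \<open>v\<in>V\<close>] by auto
qed

lemma step_expect:
  assumes "S \<subseteq> V"
  shows "(\<Sum>x\<in>Pow V. g x * pmf (moran_step V out r S) x) = drift_sum V out r S g"
proof -
  have inner: "(\<Sum>x\<in>Pow V. g x * pmf (map_pmf (newst S v) (pmf_of_set (out v))) x)
      = (\<Sum>w\<in>out v. g (newst S v w)) / card (out v)" if v: "v \<in> V" for v
  proof -
    have "(\<Sum>x\<in>Pow V. g x * pmf (map_pmf (newst S v) (pmf_of_set (out v))) x)
        = (\<integral>x. g x \<partial>measure_pmf (map_pmf (newst S v) (pmf_of_set (out v))))"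
      by (rule integral_measure_pmf_real[symmetric]) (use finV outne[OF v] outfin[OF v] newst_sub[OF assms v] in auto)
    also have "\<dots> = (\<integral>w. g (newst S v w) \<partial>measure_pmf (pmf_of_set (out v)))" by simp
    also have "\<dots> = (\<Sum>w\<in>out v. g (newst S v w)) / card (out v)"
      by (rule integral_pmf_of_set) (use outne[OF v] outfin[OF v] in auto)
    finally show ?thesis .
  qed
  have pm: "pmf (moran_step V out r S) x = (\<Sum>v\<in>V. pmf (map_pmf (newst S v) (pmf_of_set (out v))) x * om S v)" for x
    unfolding step_eq pmf_bind
    by (subst integral_measure_pmf_real[of V]) (use finV set_om in \<open>auto simp: pmf_om\<close>)
  have "(\<Sum>x\<in>Pow V. g x * pmf (moran_step V out r S) x)
      = (\<Sum>x\<in>Pow V. \<Sum>v\<in>V. om S v * (g x * pmf (map_pmf (newst S v) (pmf_of_set (out v))) x))"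
    unfolding pm by (simp add: sum_distrib_left mult_ac)
  also have "\<dots> = (\<Sum>v\<in>V. om S v * (\<Sum>x\<in>Pow V. g x * pmf (map_pmf (newst S v) (pmf_of_set (out v))) x))"
    by (subst sum.swap) (simp add: sum_distrib_left)
  also have "\<dots> = (\<Sum>v\<in>V. om S v * ((\<Sum>w\<in>out v. g (newst S v w)) / card (out v)))"
    using inner by simp
  also have "\<dots> = drift_sum V out r S g"
    unfolding drift_sum_def om_def by (rule sum.cong) auto
  finally show ?thesis .
qed

definition Ex :: "'v set pmf \<Rightarrow> ('v set \<Rightarrow> real) \<Rightarrow> real" where
  "Ex M g = (\<Sum>x\<in>Pow V. g x * pmf M x)"

lemma dist_Suc: "moran_dist V out r x0 (Suc t) = bind_pmf (moran_dist V out r x0 t) (moran_step V out r)"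
  by (simp add: moran_dist_def)

lemma set_dist: assumes "x0 \<in> V" shows "set_pmf (moran_dist V out r x0 t) \<subseteq> Pow V"
proof (induction t)
  case 0 then show ?case using assms by (simp add: moran_dist_def)
next
  case (Suc t)
  show ?case unfolding dist_Suc
  proof
    fix x assume "x \<in> set_pmf (bind_pmf (moran_dist V out r x0 t) (moran_step V out r))"
    then obtain y where y: "y \<in> set_pmf (moran_dist V out r x0 t)" "x \<in> set_pmf (moran_step V out r y)"
      by auto
    then have "y \<subseteq> V" using Suc by auto
    then show "x \<in> Pow V" using set_step y(2) by blast
  qed
qed

lemma Ex_bind:
  assumes "set_pmf M \<subseteq> Pow V"
  shows "Ex (bind_pmf M (moran_step V out r)) g = (\<Sum>y\<in>Pow V. pmf M y * drift_sum V out r y g)"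
proof -
  have pm: "pmf (bind_pmf M (moran_step V out r)) x = (\<Sum>y\<in>Pow V. pmf (moran_step V out r y) x * pmf M y)" for x
    unfolding pmf_bind
    by (subst integral_measure_pmf_real[of "Pow V"]) (use finV assms in auto)
  have "Ex (bind_pmf M (moran_step V out r)) g = (\<Sum>x\<in>Pow V. \<Sum>y\<in>Pow V. pmf M y * (g x * pmf (moran_step V out r y) x))"
    unfolding Ex_def pm by (simp add: sum_distrib_left mult_ac)
  also have "\<dots> = (\<Sum>y\<in>Pow V. pmf M y * (\<Sum>x\<in>Pow V. g x * pmf (moran_step V out r y) x))"
    by (subst sum.swap) (simp add: sum_distrib_left)
  also have "\<dots> = (\<Sum>y\<in>Pow V. pmf M y * drift_sum V out r y g)"
    by (rule sum.cong) (auto simp: step_expect)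
  finally show ?thesis .
qed

lemma uniform_gap:
  fixes N :: "'a set" and h :: "'a \<Rightarrow> real"
  assumes "finite N" "\<And>x. x \<in> N \<Longrightarrow> h x > 0"
  shows "\<exists>c>0. \<forall>x\<in>N. h x \<ge> c"
proof (cases "N = {}")
  case True then show ?thesis by (auto intro: exI[of _ 1])
next
  case False
  show ?thesis
  proof (rule exI[of _ "Min (h ` N)"], intro conjI ballI)
    show "Min (h ` N) > 0" using assms False by (simp add: Min_gr_iff)
    fix x assume "x \<in> N" then show "h x \<ge> Min (h ` N)" using assms by simp
  qed
qed

lemma ext_lower:
  assumes x0: "x0 \<in> V"
    and bnd: "\<And>S. 0 \<le> \<phi> S" "\<And>S. \<phi> S \<le> 1"
    and drift: "\<And>S. S \<subseteq> V \<Longrightarrow> drift_sum V out r S \<phi> \<ge> \<phi> S"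
    and strict: "\<And>S. S \<subseteq> V \<Longrightarrow> S \<noteq> {} \<Longrightarrow> \<phi> S > 0 \<Longrightarrow> drift_sum V out r S \<phi> > \<phi> S"
  shows "extinction_prob V out r x0 \<ge> \<phi> {x0}"
proof -
  define N where "N = {S\<in>Pow V. S \<noteq> {} \<and> \<phi> S > 0}"
  have finN: "finite N" unfolding N_def using finV by auto
  have pos: "\<And>S. S \<in> N \<Longrightarrow> drift_sum V out r S \<phi> - \<phi> S > 0"
    using strict unfolding N_def by auto
  obtain c where c: "c > 0" "\<And>S. S \<in> N \<Longrightarrow> drift_sum V out r S \<phi> - \<phi> S \<ge> c"
  proof -
    have "\<exists>c>0. \<forall>S\<in>N. drift_sum V out r S \<phi> - \<phi> S \<ge> c" by (rule uniform_gap[OF finN]) (rule pos)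
    then show ?thesis using that by auto
  qed
  define D where "D t = moran_dist V out r x0 t" for t
  define \<psi> where "\<psi> t = Ex (D t) \<phi>" for t
  define \<pi> where "\<pi> t = (\<Sum>S\<in>N. pmf (D t) S)" for t
  have sD: "set_pmf (D t) \<subseteq> Pow V" for t unfolding D_def using set_dist[OF x0] .
  have sum1: "(\<Sum>S\<in>Pow V. pmf (D t) S) = 1" for t by (rule sum_pmf_eq_1) (use finV sD in auto)
  have NsubP: "N \<subseteq> Pow V" unfolding N_def by auto
  have psi_le: "\<psi> t \<le> 1" for t
  proof -
    have "\<psi> t \<le> (\<Sum>S\<in>Pow V. 1 * pmf (D t) S)"
      unfolding \<psi>_def Ex_def by (rule sum_mono, rule mult_right_mono) (use bnd in auto)
    then show ?thesis using sum1 by simp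
  qed
  have step: "\<psi> (Suc t) \<ge> \<psi> t + c * \<pi> t" for t
  proof -
    have "\<psi> (Suc t) = (\<Sum>y\<in>Pow V. pmf (D t) y * drift_sum V out r y \<phi>)"
      unfolding \<psi>_def D_def dist_Suc by (rule Ex_bind) (use sD[unfolded D_def] in auto)
    also have "\<dots> \<ge> (\<Sum>y\<in>Pow V. pmf (D t) y * (\<phi> y + (if y \<in> N then c else 0)))"
    proof (rule sum_mono, rule mult_left_mono)
      fix y assume "y \<in> Pow V"
      then show "\<phi> y + (if y \<in> N then c else 0) \<le> drift_sum V out r y \<phi>"
        using c(2)[of y] drift[of y] by auto
    qed simp
    also have "(\<Sum>y\<in>Pow V. pmf (D t) y * (\<phi> y + (if y \<in> N then c else 0)))
        = \<psi> t + c * (\<Sum>y\<in>Pow V. if y \<in> N then pmf (D t) y else 0)"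
      unfolding \<psi>_def Ex_def sum_distrib_left sum.distrib[symmetric]
      by (rule sum.cong) (auto simp: algebra_simps)
    also have "(\<Sum>y\<in>Pow V. if y \<in> N then pmf (D t) y else 0) = \<pi> t"
      unfolding \<pi>_def using NsubP finV by (simp add: sum.If_cases Int_absorb1)
    finally show ?thesis by simp
  qed
  have pi_nn: "\<pi> t \<ge> 0" for t unfolding \<pi>_def by (simp add: sum_nonneg)
  have psi0: "\<psi> 0 = \<phi> {x0}"
  proof -
    have "\<psi> 0 = (\<Sum>x\<in>Pow V. if x = {x0} then \<phi> x else 0)"
      unfolding \<psi>_def Ex_def D_def moran_dist_def by (rule sum.cong) (auto simp: indicator_def)
    also have "\<dots> = \<phi> {x0}" using x0 finV by (simp add: sum.delta')
    finally show ?thesis .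
  qed
  have mono: "\<psi> t \<ge> \<phi> {x0} + c * (\<Sum>s<t. \<pi> s)" for t
  proof (induction t)
    case 0 then show ?case using psi0 by simp
  next
    case (Suc t) then show ?case using step[of t] by (simp add: algebra_simps)
  qed
  have extl: "pmf (D t) {} \<ge> \<psi> t - \<pi> t" for t
  proof -
    have "\<psi> t \<le> (\<Sum>S\<in>Pow V. ((if S = {} then 1 else 0) + (if S \<in> N then 1 else 0)) * pmf (D t) S)"
      unfolding \<psi>_def Ex_def
    proof (rule sum_mono, rule mult_right_mono)
      fix S assume "S \<in> Pow V"
      then show "\<phi> S \<le> (if S = {} then 1 else 0) + (if S \<in> N then 1 else 0)"
        using bnd[of S] unfolding N_def by (cases "S = {}") auto
    qed simp
    also have "\<dots> = (\<Sum>S\<in>Pow V. if S = {} then pmf (D t) S else 0) + (\<Sum>S\<in>Pow V. if S \<in> N then pmf (D t) S else 0)"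
      by (subst sum.distrib[symmetric]) (rule sum.cong, auto)
    also have "\<dots> = pmf (D t) {} + \<pi> t"
      unfolding \<pi>_def using NsubP finV by (simp add: sum.delta' sum.inter_restrict[symmetric] Int_absorb1)
    finally show ?thesis by simp
  qed
  have bdd: "bdd_above (range (\<lambda>t. pmf (D t) {}))"
    by (rule bdd_aboveI[of _ 1]) (auto simp: pmf_le_1)
  show ?thesis
  proof (rule field_le_epsilon)
    fix e :: real assume e: "e > 0"
    define T where "T = nat \<lceil>1 / (c * e)\<rceil> + 1"
    have T1: "real T * (c * e) > 1"
    proof -
      have "real T > 1 / (c * e)" unfolding T_def by linarith
      then show ?thesis using c e by (simp add: field_simps)
    qed
    have "\<exists>t<T. \<pi> t \<le> e"
    proof (rule ccontr)
      assume "\<not> ?thesis"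
      then have "\<forall>t<T. \<pi> t > e" by auto
      then have "(\<Sum>s<T. \<pi> s) \<ge> (\<Sum>s<T. e)" by (intro sum_mono) auto
      then have "c * (\<Sum>s<T. \<pi> s) \<ge> c * (real T * e)" using c by (simp add: mult_left_mono)
      moreover have "\<phi> {x0} + c * (\<Sum>s<T. \<pi> s) \<le> 1" using mono[of T] psi_le[of T] by linarith
      ultimately show False using T1 bnd[of "{x0}"] by (simp add: algebra_simps)
    qed
    then obtain t where "\<pi> t \<le> e" by auto
    moreover have "\<psi> t \<ge> \<phi> {x0}"
    proof -
      have "c * (\<Sum>s<t. \<pi> s) \<ge> 0" using c pi_nn by (simp add: sum_nonneg)
      then show ?thesis using mono[of t] by linarith
    qed
    moreover have "pmf (D t) {} \<le> extinction_prob V out r x0"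
      unfolding extinction_prob_def D_def by (rule cSUP_upper) (use bdd[unfolded D_def] in auto)
    ultimately show "\<phi> {x0} \<le> extinction_prob V out r x0 + e" using extl[of t] by linarith
  qed
qed

end

definition QQ :: "nat set \<Rightarrow> nat set" where "QQ P = {j\<in>P. 2 \<le> j}"

definition hr :: "real \<Rightarrow> nat \<Rightarrow> nat set \<Rightarrow> real" where
  "hr C k P = (if QQ P = {} then 0 else C * (real k + 1 - real (Min (QQ P))))"

definition h1 :: "real \<Rightarrow> real \<Rightarrow> nat set \<Rightarrow> real" where
  "h1 E D P = (if 1 \<in> P then (if 2 \<in> P then E else D) else 0)"

definition Hp :: "real \<Rightarrow> real \<Rightarrow> real \<Rightarrow> nat \<Rightarrow> nat set \<Rightarrow> real" where
  "Hp C E D k P = h1 E D P + hr C k P"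

definition TT :: "real \<Rightarrow> real \<Rightarrow> real \<Rightarrow> nat \<Rightarrow> real \<Rightarrow> nat set \<Rightarrow> nat \<Rightarrow> real" where
  "TT C E D k r P j = (if j \<in> P then - r * (Hp C E D k (insert (j+1) P) - Hp C E D k P)
                      else Hp C E D k P - Hp C E D k (P - {j+1}))"

lemma QQ_fin: "P \<subseteq> {1..k} \<Longrightarrow> finite (QQ P)"
  unfolding QQ_def by (rule finite_subset[of _ "{1..k}"]) auto

lemma hr_nonneg: assumes "P \<subseteq> {1..k}" "C \<ge> 0" shows "hr C k P \<ge> 0"
proof (cases "QQ P = {}")
  case False
  then have "Min (QQ P) \<in> QQ P" using QQ_fin[OF assms(1)] by simp
  then have "Min (QQ P) \<le> k" using assms(1) unfolding QQ_def by auto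
  then show ?thesis using False assms(2) unfolding hr_def by simp
qed (simp add: hr_def)

lemma hr_remove: assumes "P \<subseteq> {1..k}" "C \<ge> 0" shows "hr C k (P - {b}) \<le> hr C k P"
proof -
  have Q: "QQ (P - {b}) = QQ P - {b}" unfolding QQ_def by auto
  show ?thesis
  proof (cases "QQ P - {b} = {}")
    case True then show ?thesis using hr_nonneg[OF assms] Q by (simp add: hr_def)
  next
    case False
    have fin: "finite (QQ P)" using QQ_fin[OF assms(1)] .
    have "Min (QQ P) \<le> Min (QQ P - {b})"
      using False fin by (intro Min_antimono) auto
    then have "C * (real k + 1 - real (Min (QQ P - {b}))) \<le> C * (real k + 1 - real (Min (QQ P)))"
      using assms(2) by (intro mult_left_mono) auto
    moreover have "QQ P \<noteq> {}" using False by auto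
    ultimately show ?thesis using False Q unfolding hr_def by simp
  qed
qed

lemma hr_remove_min: assumes "P \<subseteq> {1..k}" "C \<ge> 0" "QQ P \<noteq> {}" "a = Min (QQ P)"
  shows "hr C k P - hr C k (P - {a}) \<ge> C"
proof -
  have fin: "finite (QQ P)" using QQ_fin[OF assms(1)] .
  have aQ: "a \<in> QQ P" using assms(3,4) fin by simp
  have ak: "a \<le> k" using aQ assms(1) unfolding QQ_def by auto
  have Q: "QQ (P - {a}) = QQ P - {a}" unfolding QQ_def by auto
  show ?thesis
  proof (cases "QQ P - {a} = {}")
    case True
    have "real k + 1 - real a \<ge> 1" using ak by simp
    then have "C \<le> C * (real k + 1 - real a)" using assms(2) mult_left_mono[of 1 _ C] by simp
    then show ?thesis using True Q assms by (simp add: hr_def)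
  next
    case False
    have "Min (QQ P - {a}) \<in> QQ P - {a}" using False fin by (intro Min_in) auto
    moreover have "\<forall>x\<in>QQ P. a \<le> x" using assms(4) fin by simp
    ultimately have "Min (QQ P - {a}) \<noteq> a" "a \<le> Min (QQ P - {a})" by auto
    then have "Min (QQ P - {a}) \<ge> a + 1" by linarith
    then have "real (Min (QQ P - {a})) \<ge> real a + 1" by simp
    moreover have "hr C k P - hr C k (P - {a}) = C * (real (Min (QQ P - {a})) - real a)"
      using False Q assms(3,4) unfolding hr_def by (simp add: algebra_simps)
    ultimately show ?thesis using assms(2) mult_left_mono[of 1 "real (Min (QQ P - {a})) - real a" C] by simp
  qed
qed

lemma hr_insert_above: assumes "P \<subseteq> {1..k}" "j \<in> P" "j \<ge> 2"
  shows "hr C k (insert (j+1) P) = hr C k P"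
proof -
  have fin: "finite (QQ P)" using QQ_fin[OF assms(1)] .
  have jQ: "j \<in> QQ P" using assms unfolding QQ_def by auto
  have Q: "QQ (insert (j+1) P) = insert (j+1) (QQ P)" using assms(3) unfolding QQ_def by auto
  have "Min (QQ P) \<le> j" using jQ fin by simp
  then have "Min (insert (j+1) (QQ P)) = Min (QQ P)"
  proof (intro Min_eqI)
    show "finite (insert (j+1) (QQ P))" using fin by simp
    have "Min (QQ P) \<in> QQ P" using fin jQ by (intro Min_in) auto
    then show "Min (QQ P) \<in> insert (j+1) (QQ P)" by simp
  next
    fix y assume "y \<in> insert (j+1) (QQ P)" "Min (QQ P) \<le> j"
    then show "Min (QQ P) \<le> y" using fin by auto
  qed
  then show ?thesis using Q jQ unfolding hr_def by auto
qed

lemma h1_other: "b \<noteq> 1 \<Longrightarrow> b \<noteq> 2 \<Longrightarrow> h1 E D (P - {b}) = h1 E D P"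
  "b \<noteq> 1 \<Longrightarrow> b \<noteq> 2 \<Longrightarrow> h1 E D (insert b P) = h1 E D P"
  unfolding h1_def by auto

lemma QQ_rem1: "QQ (P - {1}) = QQ P" "QQ (insert 1 P) = QQ P" unfolding QQ_def by auto

locale pathpar =
  fixes C E D M r :: real and k :: nat
  assumes C0: "C \<ge> 0" and M2: "M \<ge> 2" and r1: "r \<ge> 1" and k1: "k \<ge> 1"
    and Edef: "E = C / (M - 1)" and Ddef: "D = r * C * k / (M - 1)"
begin

lemma E0: "E \<ge> 0" using C0 M2 Edef by simp
lemma ED: "E \<le> D"
proof -
  have "real k \<ge> 1" using k1 by simp
  then have "1 * 1 \<le> r * real k" using r1 by (intro mult_mono) auto
  then have "1 \<le> r * real k" by simp
  then have "C * 1 \<le> C * (r * real k)" using C0 by (rule mult_left_mono)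
  then show ?thesis unfolding Edef Ddef using M2 by (simp add: divide_right_mono mult_ac)
qed
lemma D0: "D \<ge> 0" using E0 ED by simp

abbreviation "H P \<equiv> Hp C E D k P"
abbreviation "T P j \<equiv> TT C E D k r P j"

lemma H_nonneg: "P \<subseteq> {1..k} \<Longrightarrow> H P \<ge> 0"
  unfolding Hp_def using hr_nonneg[of P k C] C0 E0 D0 by (simp add: h1_def)

lemma H_rem1: "H P - H (P - {1}) = h1 E D P"
  unfolding Hp_def hr_def QQ_rem1 by (simp add: h1_def)

lemma H_ins1: "P \<subseteq> {1..k} \<Longrightarrow> H (insert 1 P) - H P \<le> D"
  unfolding Hp_def hr_def QQ_rem1 using ED D0 by (simp add: h1_def)

lemma H_ins1_nonneg: "H (insert 1 P) - H P \<ge> 0"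
  unfolding Hp_def hr_def QQ_rem1 using E0 D0 by (simp add: h1_def)

lemma h1_nonneg: "h1 E D P \<ge> 0" using E0 D0 by (simp add: h1_def)

lemma T_nonneg:
  assumes P: "P \<subseteq> {1..k}" and j: "j \<in> {1..<k}" and nf: "\<not> (j = 1 \<and> 1 \<in> P \<and> 2 \<notin> P)"
  shows "T P j \<ge> 0"
proof (cases "j \<in> P")
  case True
  show ?thesis
  proof (cases "j + 1 \<in> P")
    case True then show ?thesis using \<open>j\<in>P\<close> by (simp add: TT_def insert_absorb)
  next
    case False
    have j2: "j \<ge> 2"
    proof (rule ccontr)
      assume "\<not> j \<ge> 2" then have "j = 1" using j by auto
      then show False using nf True False by (auto simp: numeral_2_eq_2)
    qed
    have "H (insert (j+1) P) = H P"
      unfolding Hp_def using hr_insert_above[OF P True j2] h1_other(2)[of "j+1"] j2 by simp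
    then show ?thesis using True by (simp add: TT_def)
  qed
next
  case False
  show ?thesis
  proof (cases "j + 1 \<in> P")
    case False then show ?thesis using \<open>j\<notin>P\<close> by (simp add: TT_def)
  next
    case True
    have "h1 E D (P - {j+1}) = h1 E D P"
    proof (cases "j = 1")
      case True then show ?thesis using \<open>j\<notin>P\<close> by (simp add: h1_def)
    next
      case False then show ?thesis using j by (intro h1_other(1)) auto
    qed
    then have "H (P - {j+1}) \<le> H P" unfolding Hp_def using hr_remove[OF P C0] by simp
    then show ?thesis using \<open>j\<notin>P\<close> by (simp add: TT_def)
  qed
qed

lemma T_back_min:
  assumes P: "P \<subseteq> {1..k}" and Q: "QQ P \<noteq> {}" and a: "a = Min (QQ P)" and na: "a - 1 \<notin> P"
  shows "T P (a - 1) \<ge> C"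
proof -
  have fin: "finite (QQ P)" using QQ_fin[OF P] .
  have aQ: "a \<in> QQ P" using Q a fin by simp
  then have a2: "a \<ge> 2" and aP: "a \<in> P" unfolding QQ_def by auto
  have "h1 E D (P - {a}) = h1 E D P"
  proof (cases "a = 2")
    case True then have "1 \<notin> P" using na by simp
    then show ?thesis by (simp add: h1_def)
  next
    case False then show ?thesis using a2 by (intro h1_other(1)) auto
  qed
  moreover have "hr C k P - hr C k (P - {a}) \<ge> C" using hr_remove_min[OF P C0 Q a] .
  moreover have "a - 1 + 1 = a" using a2 by simp
  ultimately show ?thesis using na unfolding TT_def Hp_def by simp
qed

lemma T_front1:
  assumes P: "P \<subseteq> {1..k}" and "1 \<in> P" "2 \<notin> P" "k \<ge> 2"
  shows "T P 1 \<ge> - r * (C * (real k - 1) + E - D)"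
proof -
  have Q: "QQ (insert 2 P) = insert 2 (QQ P)" unfolding QQ_def by auto
  have fin: "finite (QQ P)" using QQ_fin[OF P] .
  have "Min (insert 2 (QQ P)) = 2"
  proof (rule Min_eqI)
    show "finite (insert 2 (QQ P))" using fin by simp
  qed (auto simp: QQ_def)
  then have "hr C k (insert 2 P) = C * (real k - 1)" unfolding hr_def Q by simp
  moreover have "h1 E D (insert 2 P) = E" "h1 E D P = D" using assms by (auto simp: h1_def)
  moreover have "hr C k P \<ge> 0" using hr_nonneg[OF P C0] .
  ultimately have "H (insert 2 P) - H P \<le> C * (real k - 1) + E - D" unfolding Hp_def by simp
  then have "r * (H (insert 2 P) - H P) \<le> r * (C * (real k - 1) + E - D)" using r1 by (intro mult_left_mono) auto
  then show ?thesis using assms unfolding TT_def by (simp add: numeral_2_eq_2)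
qed

lemma sum_ge_single:
  fixes f :: "nat \<Rightarrow> real"
  assumes "finite A" "j \<in> A" "\<And>i. i \<in> A \<Longrightarrow> i \<noteq> j \<Longrightarrow> f i \<ge> 0"
  shows "sum f A \<ge> f j"
proof -
  have "sum f A = f j + sum f (A - {j})" using assms(1,2) by (simp add: sum.remove)
  moreover have "sum f (A - {j}) \<ge> 0" using assms(3) by (intro sum_nonneg) auto
  ultimately show ?thesis by simp
qed

lemma path_lemma:
  assumes P: "P \<subseteq> {1..k}"
  shows "(M - 1) * (H P - H (P - {1})) + (\<Sum>j\<in>{1..<k}. T P j) \<ge> (if P = {} then 0 else C)"
proof -
  note Hr = H_rem1[of P]
  have M1: "M - 1 \<ge> 1" using M2 by simp
  consider (e) "P = {}" | (a) "1 \<in> P" "2 \<in> P" | (b) "1 \<in> P" "2 \<notin> P" | (c) "1 \<notin> P" "P \<noteq> {}" by blast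
  then show ?thesis
  proof cases
    case e
    have "(\<Sum>j\<in>{1..<k}. T P j) \<ge> 0"
    proof (rule sum_nonneg)
      fix j assume "j \<in> {1..<k}" then show "T P j \<ge> 0" using e by (intro T_nonneg[OF P]) auto
    qed
    moreover have "(M - 1) * (H P - H (P - {1})) \<ge> 0" using Hr h1_nonneg M1 by simp
    ultimately show ?thesis using e by simp
  next
    case a
    have "(\<Sum>j\<in>{1..<k}. T P j) \<ge> 0"
    proof (rule sum_nonneg)
      fix j assume "j \<in> {1..<k}" then show "T P j \<ge> 0" using a by (intro T_nonneg[OF P]) auto
    qed
    moreover have "(M - 1) * (H P - H (P - {1})) = C" using Hr a M1 Edef by (simp add: h1_def)
    ultimately show ?thesis using a by auto
  next
    case b
    have hD: "(M - 1) * (H P - H (P - {1})) = r * C * k" using Hr b M1 Ddef by (simp add: h1_def)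
    show ?thesis
    proof (cases "k \<ge> 2")
      case True
      have "(\<Sum>j\<in>{1..<k}. T P j) \<ge> T P 1"
      proof (rule sum_ge_single)
        show "1 \<in> {1..<k}" using True by simp
        fix i assume "i \<in> {1..<k}" "i \<noteq> 1" then show "T P i \<ge> 0" by (intro T_nonneg[OF P]) auto
      qed simp
      moreover have "T P 1 \<ge> - r * (C * (real k - 1) + E - D)" using T_front1[OF P b True] .
      moreover have "r * C * k - r * (C * (real k - 1) + E - D) \<ge> C"
      proof -
        have "r * C * k - r * (C * (real k - 1) + E - D) = r * C + r * (D - E)" by (simp add: algebra_simps)
        moreover have "r * (D - E) \<ge> 0" using ED r1 by simp
        moreover have "r * C \<ge> C" using mult_right_mono[OF r1 C0] by simp
        ultimately show ?thesis by linarith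
      qed
      ultimately show ?thesis using hD b by auto
    next
      case False
      then have "k = 1" using k1 by simp
      moreover have "r * C \<ge> C" using mult_right_mono[OF r1 C0] by simp
      moreover have "P \<noteq> {}" using b by auto
      ultimately show ?thesis using hD by simp
    qed
  next
    case c
    have "\<forall>j\<in>P. 2 \<le> j"
    proof
      fix j assume "j \<in> P" then have "j \<ge> 1" "j \<noteq> 1" using P c by auto
      then show "2 \<le> j" by simp
    qed
    then have QP: "QQ P = P" unfolding QQ_def by auto
    define a where "a = Min (QQ P)"
    have fin: "finite P" using finite_subset[OF P] by simp
    have aP: "a \<in> P" using c fin QP a_def by simp
    have a2: "a \<ge> 2" using aP QP unfolding QQ_def by auto
    have ak: "a \<le> k" using aP P by auto
    have na: "a - 1 \<notin> P"
    proof
      assume "a - 1 \<in> P"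
      then have "a \<le> a - 1" using fin QP a_def by simp
      then show False using a2 by simp
    qed
    have "(\<Sum>j\<in>{1..<k}. T P j) \<ge> T P (a - 1)"
    proof (rule sum_ge_single)
      show "a - 1 \<in> {1..<k}" using a2 ak by auto
      fix i assume "i \<in> {1..<k}" "i \<noteq> a - 1" then show "T P i \<ge> 0" using c by (intro T_nonneg[OF P]) auto
    qed simp
    moreover have "T P (a - 1) \<ge> C" using T_back_min[OF P _ a_def na] QP c by simp
    moreover have "H P - H (P - {1}) = 0" using Hr c by (simp add: h1_def)
    ultimately show ?thesis using c by simp
  qed
qed

end

locale sstar =
  fixes k l m :: nat and r p wc C E D lam :: real and i0 a0 :: nat
  assumes k1: "k \<ge> 1" and l2: "l \<ge> 2" and m2: "m \<ge> 2" and r1: "r > 1"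
    and i0: "i0 \<in> {1..l}" and a0: "a0 \<in> {1..m}"
    and p0: "p > 0" and p4: "p \<le> 1/4"
    and wc_def: "wc = 2 * r / (real l - 1)" and C_def: "C = 2 * r * wc"
    and E_def: "E = C / (real m - 1)" and D_def: "D = r * C * k / (real m - 1)"
    and lam_def: "lam = 2 * p"
    and cond1: "D \<le> 1" and cond2: "8 * p * r * D * real l * real m < 1"
begin

abbreviation "VV \<equiv> superstar_V k l m"
abbreviation "OUTS \<equiv> superstar_out k l m"
abbreviation "RR \<equiv> reservoirs l m"
abbreviation "x0 \<equiv> Res i0 a0"

lemma wc_pos: "wc > 0" using wc_def r1 l2 by simp
lemma C_pos: "C > 0" using C_def wc_pos r1 by simp

sublocale pp: pathpar C E D "real m" r k
  by unfold_locales (use C_pos m2 r1 k1 E_def D_def in auto)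

lemma R_eq: "RR = (\<lambda>(i,a). Res i a) ` ({1..l} \<times> {1..m})"
  unfolding reservoirs_def by auto

lemma PA_eq: "{Path i j |i j. i \<in> {1..l} \<and> j \<in> {1..k}} = (\<lambda>(i,j). Path i j) ` ({1..l} \<times> {1..k})"
  by auto

lemma V_eq: "VV = RR \<union> (\<lambda>(i,j). Path i j) ` ({1..l} \<times> {1..k}) \<union> {Centre}"
  unfolding superstar_V_def PA_eq ..

lemma finR: "finite RR" unfolding R_eq by simp
lemma finV: "finite VV" unfolding V_eq using finR by simp

lemma cardR: "card RR = l * m"
proof -
  have "inj_on (\<lambda>(i,a). Res i a) ({1..l} \<times> {1..m})" by (auto simp: inj_on_def)
  then show ?thesis unfolding R_eq by (simp add: card_image)
qed

lemma x0R: "x0 \<in> RR" using i0 a0 unfolding reservoirs_def by auto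
lemma x0V: "x0 \<in> VV" using x0R unfolding superstar_V_def by auto

lemma out_props0: assumes "v \<in> VV" shows "OUTS v \<noteq> {} \<and> finite (OUTS v) \<and> OUTS v \<subseteq> VV"
proof -
  have "v \<in> RR \<or> (\<exists>i j. v = Path i j \<and> i \<in> {1..l} \<and> j \<in> {1..k}) \<or> v = Centre"
    using assms unfolding superstar_V_def by auto
  then show ?thesis
  proof (elim disjE exE conjE)
    assume "v \<in> RR"
    then obtain i a where "v = Res i a" "i \<in> {1..l}" "a \<in> {1..m}" unfolding reservoirs_def by auto
    then show ?thesis using k1 unfolding superstar_V_def by auto
  next
    fix i j assume "v = Path i j" "i \<in> {1..l}" "j \<in> {1..k}"
    then show ?thesis unfolding superstar_V_def by auto
  next
    assume "v = Centre"
    then show ?thesis using x0R finR unfolding superstar_V_def by auto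
  qed
qed

lemma out_props: assumes "v \<in> VV" shows "OUTS v \<noteq> {}" "finite (OUTS v)" "OUTS v \<subseteq> VV"
  using out_props0[OF assms] by auto

lemma mg: "mgraph VV OUTS r"
  by unfold_locales (use finV x0V out_props r1 in auto)

definition G0 :: "ss_vertex set" where "G0 = insert x0 (insert Centre (Path i0 ` {1..k}))"
definition PP :: "ss_vertex set \<Rightarrow> nat set" where "PP S = {j. Path i0 j \<in> S}"
definition hc :: "bool \<Rightarrow> real" where "hc cc = (if cc then wc else 0)"
definition FF :: "bool \<Rightarrow> bool \<Rightarrow> nat set \<Rightarrow> real" where
  "FF xa cc P = (if xa then p - lam * (hc cc + Hp C E D k P) else 1 - (hc cc + Hp C E D k P))"
definition phi :: "ss_vertex set \<Rightarrow> real" where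
  "phi S = (if S \<subseteq> G0 then max 0 (FF (x0 \<in> S) (Centre \<in> S) (PP S)) else 0)"
definition delta :: "ss_vertex set \<Rightarrow> ss_vertex \<Rightarrow> real" where
  "delta S v = fitness r S v * ((\<Sum>w\<in>OUTS v. phi (newst S v w)) / card (OUTS v) - phi S)"

lemma PP_sub: "S \<subseteq> G0 \<Longrightarrow> PP S \<subseteq> {1..k}"
  unfolding PP_def G0_def by auto

lemma G0V: "G0 \<subseteq> VV" unfolding G0_def superstar_V_def using x0R i0 by auto

lemma hc_nonneg: "hc cc \<ge> 0" using wc_pos by (simp add: hc_def)
lemma lam_pos: "lam > 0" "lam \<le> 1/2" using lam_def p0 p4 by auto

lemma FF_le1: assumes "P \<subseteq> {1..k}" shows "FF xa cc P \<le> 1"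
proof -
  have "hc cc + Hp C E D k P \<ge> 0" using hc_nonneg pp.H_nonneg[OF assms] by simp
  moreover have "lam * (hc cc + Hp C E D k P) \<ge> 0" using lam_pos calculation by simp
  ultimately show ?thesis using p4 unfolding FF_def by auto
qed

lemma phi_nonneg: "phi S \<ge> 0" unfolding phi_def by simp
lemma phi_le1: "phi S \<le> 1"
proof (cases "S \<subseteq> G0")
  case True then show ?thesis unfolding phi_def using FF_le1[OF PP_sub[OF True]] by simp
qed (simp add: phi_def)
lemma phi_ge: "T \<subseteq> G0 \<Longrightarrow> phi T \<ge> FF (x0 \<in> T) (Centre \<in> T) (PP T)" unfolding phi_def by simp
lemma phi_eq: "T \<subseteq> G0 \<Longrightarrow> FF (x0 \<in> T) (Centre \<in> T) (PP T) > 0 \<Longrightarrow> phi T = FF (x0 \<in> T) (Centre \<in> T) (PP T)"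
  unfolding phi_def by simp
lemma phi_pos_G0: assumes pos: "phi T > 0" shows " T \<subseteq> G0 \<and> FF (x0 \<in> T) (Centre \<in> T) (PP T) > 0"
proof (cases "T \<subseteq> G0")
  case True then show ?thesis using pos unfolding phi_def by (cases "FF (x0 \<in> T) (Centre \<in> T) (PP T) > 0") auto
qed (use pos in \<open>simp add: phi_def\<close>)

lemma delta_same: assumes "v \<in> VV" "\<And>w. w \<in> OUTS v \<Longrightarrow> newst S v w = S" shows "delta S v = 0"
proof -
  have "(\<Sum>w\<in>OUTS v. phi (newst S v w)) = card (OUTS v) * phi S" using assms(2) by simp
  moreover have "card (OUTS v) \<noteq> 0" using out_props[OF assms(1)] by simp
  ultimately show ?thesis unfolding delta_def by simp
qed

lemma delta_single: assumes "OUTS v = {u}" shows "delta S v = fitness r S v * (phi (newst S v u) - phi S)"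
  unfolding delta_def assms by simp

lemma notin_S: "S \<subseteq> G0 \<Longrightarrow> v \<notin> G0 \<Longrightarrow> v \<notin> S" by auto

lemma sum_decomp:
  assumes S: "S \<subseteq> G0"
  shows "(\<Sum>v\<in>VV. delta S v) = (real m - 1) * (phi (S - {Path i0 1}) - phi S) + delta S x0
     + (real l - 1) * (phi (S - {Centre}) - phi S) + (\<Sum>j\<in>{1..<k}. delta S (Path i0 j))
     + delta S (Path i0 k) + delta S Centre"
proof -
  define Z1 where "Z1 = (\<lambda>a. Res i0 a) ` ({1..m} - {a0})"
  define Z3 where "Z3 = (\<lambda>i. Path i k) ` ({1..l} - {i0})"
  define Z4 where "Z4 = (\<lambda>j. Path i0 j) ` {1..<k}"
  define ZZ where "ZZ = Z1 \<union> ({x0} \<union> (Z3 \<union> (Z4 \<union> ({Path i0 k} \<union> {Centre}))))"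
  have fins: "finite Z1" "finite Z3" "finite Z4" unfolding Z1_def Z3_def Z4_def by auto
  have ZV: "ZZ \<subseteq> VV" unfolding ZZ_def Z1_def Z3_def Z4_def superstar_V_def reservoirs_def
    using i0 a0 k1 by auto
  have zero: "delta S v = 0" if v: "v \<in> VV - ZZ" for v
  proof -
    have vV: "v \<in> VV" using v by simp
    have "v \<in> RR \<or> (\<exists>i j. v = Path i j \<and> i \<in> {1..l} \<and> j \<in> {1..k}) \<or> v = Centre"
      using vV unfolding superstar_V_def by auto
    then show ?thesis
    proof (elim disjE exE conjE)
      assume "v \<in> RR"
      then obtain i a where va: "v = Res i a" "i \<in> {1..l}" "a \<in> {1..m}" unfolding reservoirs_def by auto
      have "i \<noteq> i0"
      proof
        assume "i = i0"
        then have "v \<in> ZZ" using va unfolding ZZ_def Z1_def by (cases "a = a0") auto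
        then show False using v by simp
      qed
      then have "v \<notin> S" "Path i 1 \<notin> S" using S va unfolding G0_def by auto
      then show ?thesis using va by (intro delta_same[OF vV]) (auto simp: newst_def)
    next
      fix i j assume vp: "v = Path i j" "i \<in> {1..l}" "j \<in> {1..k}"
      have "i \<noteq> i0"
      proof
        assume "i = i0"
        then have "v \<in> ZZ" using vp unfolding ZZ_def Z4_def by (cases "j = k") auto
        then show False using v by simp
      qed
      moreover have "j \<noteq> k"
      proof
        assume "j = k"
        then have "v \<in> ZZ" using vp \<open>i \<noteq> i0\<close> unfolding ZZ_def Z3_def by auto
        then show False using v by simp
      qed
      ultimately have "v \<notin> S" "Path i (j+1) \<notin> S" "j < k" using S vp unfolding G0_def by auto
      then show ?thesis using vp by (intro delta_same[OF vV]) (auto simp: newst_def)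
    next
      assume "v = Centre" then show ?thesis using v unfolding ZZ_def by simp
    qed
  qed
  have "(\<Sum>v\<in>VV. delta S v) = (\<Sum>v\<in>ZZ. delta S v)"
    by (rule sum.mono_neutral_right[OF finV ZV]) (use zero in auto)
  also have "\<dots> = sum (delta S) Z1 + (delta S x0 + (sum (delta S) Z3 + (sum (delta S) Z4 + (delta S (Path i0 k) + delta S Centre))))"
  proof -
    have d4: "Z4 \<inter> ({Path i0 k} \<union> {Centre}) = {}" unfolding Z4_def by auto
    have d3: "Z3 \<inter> (Z4 \<union> ({Path i0 k} \<union> {Centre})) = {}" unfolding Z3_def Z4_def by auto
    have d2: "{x0} \<inter> (Z3 \<union> (Z4 \<union> ({Path i0 k} \<union> {Centre}))) = {}" unfolding Z3_def Z4_def by auto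
    have d1: "Z1 \<inter> ({x0} \<union> (Z3 \<union> (Z4 \<union> ({Path i0 k} \<union> {Centre})))) = {}" unfolding Z1_def Z3_def Z4_def by auto
    have e5: "sum (delta S) ({Path i0 k} \<union> {Centre}) = delta S (Path i0 k) + delta S Centre" by simp
    show ?thesis unfolding ZZ_def
      apply (subst sum.union_disjoint[OF fins(1) _ d1], use fins in simp)
      apply (subst sum.union_disjoint[OF _ _ d2], simp, use fins in simp)
      apply (subst sum.union_disjoint[OF fins(2) _ d3], use fins in simp)
      apply (subst sum.union_disjoint[OF fins(3) _ d4], simp)
      apply (simp only: e5)
      apply simp
      done
  qed
  also have "sum (delta S) Z1 = (real m - 1) * (phi (S - {Path i0 1}) - phi S)"
  proof -
    have inj: "inj_on (\<lambda>a. Res i0 a) ({1..m} - {a0})" by (auto simp: inj_on_def)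
    have "sum (delta S) Z1 = (\<Sum>a\<in>{1..m} - {a0}. delta S (Res i0 a))"
      unfolding Z1_def using sum.reindex[OF inj, of "delta S"] by (simp add: comp_def)
    also have "\<dots> = (\<Sum>a\<in>{1..m} - {a0}. phi (S - {Path i0 1}) - phi S)"
    proof (rule sum.cong)
      fix a assume "a \<in> {1..m} - {a0}"
      then have "Res i0 a \<notin> S" using S unfolding G0_def by auto
      then show "delta S (Res i0 a) = phi (S - {Path i0 1}) - phi S"
        by (subst delta_single) (auto simp: newst_def fitness_def)
    qed simp
    also have "\<dots> = (real m - 1) * (phi (S - {Path i0 1}) - phi S)"
      using a0 m2 by (simp add: of_nat_diff)
    finally show ?thesis .
  qed
  also have "sum (delta S) Z3 = (real l - 1) * (phi (S - {Centre}) - phi S)"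
  proof -
    have inj: "inj_on (\<lambda>i. Path i k) ({1..l} - {i0})" by (auto simp: inj_on_def)
    have "sum (delta S) Z3 = (\<Sum>i\<in>{1..l} - {i0}. delta S (Path i k))"
      unfolding Z3_def using sum.reindex[OF inj, of "delta S"] by (simp add: comp_def)
    also have "\<dots> = (\<Sum>i\<in>{1..l} - {i0}. phi (S - {Centre}) - phi S)"
    proof (rule sum.cong)
      fix i assume "i \<in> {1..l} - {i0}"
      then have "Path i k \<notin> S" using S unfolding G0_def by auto
      then show "delta S (Path i k) = phi (S - {Centre}) - phi S"
        by (subst delta_single) (auto simp: newst_def fitness_def)
    qed simp
    also have "\<dots> = (real l - 1) * (phi (S - {Centre}) - phi S)"
      using i0 l2 by (simp add: of_nat_diff)
    finally show ?thesis .
  qed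
  also have "sum (delta S) Z4 = (\<Sum>j\<in>{1..<k}. delta S (Path i0 j))"
  proof -
    have inj: "inj_on (\<lambda>j. Path i0 j) {1..<k}" by (auto simp: inj_on_def)
    show ?thesis unfolding Z4_def using sum.reindex[OF inj, of "delta S"] by (simp add: comp_def)
  qed
  finally show ?thesis by (simp add: algebra_simps)
qed

lemma aux_div: "L > 0 \<Longrightarrow> (a + (L - 1) * F) / L - F = (a - F) / (L::real)"
  by (simp add: field_simps)

definition sig :: "bool \<Rightarrow> real" where "sig xa = (if xa then lam else 1)"

lemma sig_pos: "sig xa > 0" "sig xa \<le> 1" using lam_pos by (auto simp: sig_def)

lemma PP_simps: "PP (S - {Path i0 j}) = PP S - {j}" "PP (insert (Path i0 j) S) = insert j (PP S)"
  "PP (S - {Centre}) = PP S" "PP (insert Centre S) = PP S" "PP (S - {x0}) = PP S" "PP (insert x0 S) = PP S"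
  "PP (S - {Res i a}) = PP S" "PP (insert (Res i a) S) = PP S"
  unfolding PP_def by auto

lemma FF_P: "FF xa cc Q - FF xa cc P = sig xa * (Hp C E D k P - Hp C E D k Q)"
  unfolding FF_def sig_def by (simp add: algebra_simps)
lemma FF_P': "FF xa cc Q - FF xa cc P = - (sig xa * (Hp C E D k Q - Hp C E D k P))"
  unfolding FF_def sig_def by (simp add: algebra_simps)
lemma FF_c: "FF xa False P - FF xa cc P = sig xa * hc cc" "FF xa True P - FF xa cc P = sig xa * (hc cc - wc)"
  unfolding FF_def sig_def hc_def by (auto simp: algebra_simps)

lemma G0_ins: "j \<in> {1..k} \<Longrightarrow> S \<subseteq> G0 \<Longrightarrow> insert (Path i0 j) S \<subseteq> G0"
  "S \<subseteq> G0 \<Longrightarrow> insert Centre S \<subseteq> G0" "S \<subseteq> G0 \<Longrightarrow> insert x0 S \<subseteq> G0"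
  unfolding G0_def by auto

context
  fixes S assumes S: "S \<subseteq> G0" and F0: "FF (x0 \<in> S) (Centre \<in> S) (PP S) > 0"
begin

abbreviation "xa \<equiv> x0 \<in> S"
abbreviation "cc \<equiv> Centre \<in> S"
abbreviation "PS \<equiv> PP S"
abbreviation "F0 \<equiv> FF xa cc PS"
abbreviation "HH Q \<equiv> Hp C E D k Q"

lemma phiS: "phi S = F0" using phi_eq[OF S F0] .
lemma PSk: "PS \<subseteq> {1..k}" using PP_sub[OF S] .

lemma b1: "phi (S - {Path i0 1}) - phi S \<ge> sig xa * (HH PS - HH (PS - {1}))"
proof -
  have "phi (S - {Path i0 1}) \<ge> FF xa cc (PS - {1})"
    using phi_ge[of "S - {Path i0 1}"] S by (simp add: PP_simps subset_iff)
  then show ?thesis using FF_P[of xa cc "PS - {1}" PS] phiS by simp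
qed

lemma b2: "delta S x0 \<ge> (if xa then - r * sig xa * (HH (insert 1 PS) - HH PS) else sig xa * (HH PS - HH (PS - {1})))"
proof -
  have o: "OUTS x0 = {Path i0 1}" by simp
  show ?thesis
  proof (cases xa)
    case True
    have "phi (insert (Path i0 1) S) \<ge> FF xa cc (insert 1 PS)"
      using phi_ge[OF G0_ins(1)[OF _ S, of 1]] k1 True by (simp add: PP_simps)
    then have "phi (insert (Path i0 1) S) - phi S \<ge> - sig xa * (HH (insert 1 PS) - HH PS)"
      using FF_P'[of xa cc "insert 1 PS" PS] phiS by linarith
    then have "r * (phi (insert (Path i0 1) S) - phi S) \<ge> r * (- sig xa * (HH (insert 1 PS) - HH PS))"
      using r1 by (intro mult_left_mono) auto
    then show ?thesis using True unfolding delta_single[OF o] by (simp add: newst_def fitness_def)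
  next
    case False
    then show ?thesis using b1 unfolding delta_single[OF o] by (simp add: newst_def fitness_def)
  qed
qed

lemma b3: "phi (S - {Centre}) - phi S \<ge> sig xa * hc cc"
proof -
  have "phi (S - {Centre}) \<ge> FF xa False PS"
    using phi_ge[of "S - {Centre}"] S by (simp add: PP_simps subset_iff)
  then show ?thesis using FF_c(1)[of xa PS cc] phiS by simp
qed

lemma b4: assumes j: "j \<in> {1..<k}" shows "delta S (Path i0 j) \<ge> sig xa * TT C E D k r PS j"
proof -
  have o: "OUTS (Path i0 j) = {Path i0 (j+1)}" using j by simp
  show ?thesis
  proof (cases "j \<in> PS")
    case True
    then have inS: "Path i0 j \<in> S" unfolding PP_def by simp
    have "phi (insert (Path i0 (j+1)) S) \<ge> FF xa cc (insert (j+1) PS)"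
      using phi_ge[OF G0_ins(1)[OF _ S, of "j+1"]] j by (simp add: PP_simps)
    then have "phi (insert (Path i0 (j+1)) S) - phi S \<ge> - sig xa * (HH (insert (j+1) PS) - HH PS)"
      using FF_P'[of xa cc "insert (j+1) PS" PS] phiS by linarith
    then have "r * (phi (insert (Path i0 (j+1)) S) - phi S) \<ge> r * (- sig xa * (HH (insert (j+1) PS) - HH PS))"
      using r1 by (intro mult_left_mono) auto
    then show ?thesis using True inS unfolding delta_single[OF o] TT_def
      by (simp add: newst_def fitness_def algebra_simps)
  next
    case False
    then have inS: "Path i0 j \<notin> S" unfolding PP_def by simp
    have "phi (S - {Path i0 (j+1)}) \<ge> FF xa cc (PS - {j+1})"
      using phi_ge[of "S - {Path i0 (j+1)}"] S by (simp add: PP_simps subset_iff)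
    then have "phi (S - {Path i0 (j+1)}) - phi S \<ge> sig xa * (HH PS - HH (PS - {j+1}))"
      using FF_P[of xa cc "PS - {j+1}" PS] phiS by simp
    then show ?thesis using False inS unfolding delta_single[OF o] TT_def
      by (simp add: newst_def fitness_def)
  qed
qed

lemma b5: "delta S (Path i0 k) \<ge> (if k \<in> PS then r * sig xa * (hc cc - wc) else sig xa * hc cc)"
proof -
  have o: "OUTS (Path i0 k) = {Centre}" by simp
  show ?thesis
  proof (cases "k \<in> PS")
    case True
    then have inS: "Path i0 k \<in> S" unfolding PP_def by simp
    have "phi (insert Centre S) \<ge> FF xa True PS"
      using phi_ge[OF G0_ins(2)[OF S]] by (simp add: PP_simps)
    then have "phi (insert Centre S) - phi S \<ge> sig xa * (hc cc - wc)"
      using FF_c(2)[of xa PS cc] phiS by simp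
    then have "r * (phi (insert Centre S) - phi S) \<ge> r * (sig xa * (hc cc - wc))"
      using r1 by (intro mult_left_mono) auto
    then show ?thesis using True inS unfolding delta_single[OF o]
      by (simp add: newst_def fitness_def algebra_simps)
  next
    case False
    then have inS: "Path i0 k \<notin> S" unfolding PP_def by simp
    then show ?thesis using False b3 unfolding delta_single[OF o] by (simp add: newst_def fitness_def)
  qed
qed

lemma b6: "delta S Centre \<ge> (if cc then r * (FF True True PS / (real l * real m) - F0)
                             else (FF False False PS - F0) / (real l * real m))"
proof -
  have o: "OUTS Centre = RR" by simp
  have lm: "real (card RR) = real l * real m" using cardR by simp
  have lmpos: "real l * real m > 0" using l2 m2 by simp
  have sumR: "(\<Sum>w\<in>RR. g w) = g x0 + (\<Sum>w\<in>RR - {x0}. g w)" for g :: "ss_vertex \<Rightarrow> real"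
    using finR x0R by (simp add: sum.remove)
  show ?thesis
  proof (cases cc)
    case True
    have "(\<Sum>w\<in>RR - {x0}. phi (insert w S)) \<ge> 0" by (intro sum_nonneg phi_nonneg)
    moreover have "phi (insert x0 S) \<ge> FF True True PS"
      using phi_ge[OF G0_ins(3)[OF S]] True by (simp add: PP_simps)
    ultimately have "(\<Sum>w\<in>RR. phi (newst S Centre w)) \<ge> FF True True PS"
      using True sumR[of "\<lambda>w. phi (insert w S)"] by (simp add: newst_def)
    then have "(\<Sum>w\<in>RR. phi (newst S Centre w)) / (real l * real m) \<ge> FF True True PS / (real l * real m)"
      using lmpos by (simp add: divide_right_mono)
    then have "r * ((\<Sum>w\<in>RR. phi (newst S Centre w)) / (real l * real m) - phi S) \<ge> r * (FF True True PS / (real l * real m) - F0)"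
      using r1 phiS by (intro mult_left_mono) auto
    then show ?thesis using True unfolding delta_def o lm by (simp add: fitness_def)
  next
    case False
    have rest: "(\<Sum>w\<in>RR - {x0}. phi (newst S Centre w)) = (\<Sum>w\<in>RR - {x0}. F0)"
    proof (rule sum.cong)
      fix w assume w: "w \<in> RR - {x0}"
      then have "w \<notin> S" using S unfolding G0_def reservoirs_def by auto
      then show "phi (newst S Centre w) = F0" using False phiS by (simp add: newst_def)
    qed simp
    have cr: "card (RR - {x0}) = l * m - 1" using cardR x0R finR by simp
    have "phi (S - {x0}) \<ge> FF False False PS" using phi_ge[of "S - {x0}"] S False by (simp add: PP_simps subset_iff)
    then have "(\<Sum>w\<in>RR. phi (newst S Centre w)) \<ge> FF False False PS + (real l * real m - 1) * F0"
      using False sumR[of "\<lambda>w. phi (newst S Centre w)"] rest cr l2 m2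
      by (simp add: newst_def of_nat_diff)
    then have "(\<Sum>w\<in>RR. phi (newst S Centre w)) / (real l * real m) - F0 \<ge> (FF False False PS + (real l * real m - 1) * F0) / (real l * real m) - F0"
      using lmpos by (simp add: divide_right_mono)
    also have "(FF False False PS + (real l * real m - 1) * F0) / (real l * real m) - F0 = (FF False False PS - F0) / (real l * real m)"
      using lmpos by (rule aux_div)
    finally show ?thesis using False phiS unfolding delta_def o lm by (simp add: fitness_def)
  qed
qed

end

end

context sstar begin

lemma hr_empty: "Hp C E D k {} = 0" unfolding Hp_def hr_def h1_def QQ_def by simp

lemma lwc: "(real l - 1) * wc = 2 * r" using wc_def l2 by simp

context
  fixes S assumes S: "S \<subseteq> G0" and FZ: "FF (x0 \<in> S) (Centre \<in> S) (PP S) > 0"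
begin

abbreviation "xx \<equiv> x0 \<in> S"
abbreviation "ccc \<equiv> Centre \<in> S"
abbreviation "PSS \<equiv> PP S"
abbreviation "FZ \<equiv> FF xx ccc PSS"
abbreviation "HQ Q \<equiv> Hp C E D k Q"

lemma drift_pos:
  shows "(\<Sum>v\<in>VV. delta S v) \<ge> 0" and "S \<noteq> {} \<Longrightarrow> (\<Sum>v\<in>VV. delta S v) > 0"
proof -
  define sg where "sg = sig xx"
  define g1 where "g1 = HQ PSS - HQ (PSS - {1})"
  define TS where "TS = (\<Sum>j\<in>{1..<k}. TT C E D k r PSS j)"
  define ins where "ins = HQ (insert 1 PSS) - HQ PSS"
  define h where "h = HQ PSS"
  define X where "X = (if xx then - r * sg * ins else sg * g1)"
  define Y where "Y = (if k \<in> PSS then r * sg * (hc ccc - wc) else sg * hc ccc)"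
  define Zc where "Zc = (if ccc then r * (FF True True PSS / (real l * real m) - FZ)
                             else (FF False False PSS - FZ) / (real l * real m))"
  define Q where "Q = (real m - 1) * g1 + TS"
  have PSk: "PSS \<subseteq> {1..k}" using PP_sub[OF S] .
  have sgp: "sg > 0" "sg \<le> 1" using sig_pos unfolding sg_def by auto
  have Qge: "Q \<ge> (if PSS = {} then 0 else C)" unfolding Q_def g1_def TS_def using pp.path_lemma[OF PSk] by simp
  have g1nn: "g1 \<ge> 0" unfolding g1_def using pp.H_rem1[of PSS] pp.h1_nonneg by simp
  have ins_le: "ins \<le> D" "ins \<ge> 0" unfolding ins_def using pp.H_ins1[OF PSk] pp.H_ins1_nonneg by auto
  have hnn: "h \<ge> 0" unfolding h_def using pp.H_nonneg[OF PSk] .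
  have kP: "k \<in> PSS \<Longrightarrow> PSS \<noteq> {}" by auto
  have lm: "real l * real m \<ge> 4" using l2 m2 mult_mono[of 2 "real l" 2 "real m"] by simp
  have dec: "(\<Sum>v\<in>VV. delta S v) = (real m - 1) * (phi (S - {Path i0 1}) - phi S) + delta S x0
     + (real l - 1) * (phi (S - {Centre}) - phi S) + (\<Sum>j\<in>{1..<k}. delta S (Path i0 j))
     + delta S (Path i0 k) + delta S Centre" using sum_decomp[OF S] .
  have L1: "(real m - 1) * (phi (S - {Path i0 1}) - phi S) \<ge> (real m - 1) * (sg * g1)"
    using b1[OF S FZ] m2 unfolding sg_def g1_def by (intro mult_left_mono) auto
  have L3: "(real l - 1) * (phi (S - {Centre}) - phi S) \<ge> (real l - 1) * (sg * hc ccc)"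
    using b3[OF S FZ] l2 unfolding sg_def by (intro mult_left_mono) auto
  have L4: "(\<Sum>j\<in>{1..<k}. delta S (Path i0 j)) \<ge> sg * TS"
    unfolding TS_def sum_distrib_left sg_def by (rule sum_mono) (rule b4[OF S FZ], simp)
  have L2: "delta S x0 \<ge> X" using b2[OF S FZ] unfolding X_def sg_def ins_def g1_def by simp
  have L5: "delta S (Path i0 k) \<ge> Y" using b5[OF S FZ] unfolding Y_def sg_def by simp
  have L6: "delta S Centre \<ge> Zc" using b6[OF S FZ] unfolding Zc_def by simp
  have main: "(\<Sum>v\<in>VV. delta S v) \<ge> sg * Q + X + (real l - 1) * (sg * hc ccc) + Y + Zc"
    using dec L1 L2 L3 L4 L5 L6 unfolding Q_def by (simp add: algebra_simps)
  have F0e: "FZ = (if xx then p - lam * (hc ccc + h) else 1 - (hc ccc + h))" unfolding FF_def h_def by simp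
  have key: "sg * Q + X + (real l - 1) * (sg * hc ccc) + Y + Zc > 0 \<or> (\<not> xx \<and> \<not> ccc \<and> PSS = {} \<and> sg * Q + X + (real l - 1) * (sg * hc ccc) + Y + Zc \<ge> 0)"
  proof (cases xx; cases ccc)
    assume xx: xx and ccc: ccc
    have sgl: "sg = lam" using xx unfolding sg_def sig_def by simp
    have hcc: "hc ccc = wc" using ccc unfolding hc_def by simp
    have "sg * Q \<ge> 0" using Qge sgp C_pos by (simp split: if_splits)
    moreover have "X \<ge> - r * lam * D"
    proof -
      have "r * lam * ins \<le> r * lam * D" using ins_le r1 lam_pos by (intro mult_left_mono) auto
      then show ?thesis using xx sgl unfolding X_def by simp
    qed
    moreover have "Y \<ge> 0" using hcc sgl lam_pos wc_pos unfolding Y_def by simp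
    moreover have "(real l - 1) * (sg * hc ccc) = 2 * r * lam" using lwc hcc sgl by (simp add: algebra_simps)
    moreover have "Zc \<ge> - r * p"
    proof -
      have "FF True True PSS = FZ" using xx ccc by simp
      then have "FF True True PSS / (real l * real m) = FZ / (real l * real m)" by simp
      moreover have "FZ \<le> p" using F0e xx hcc hnn wc_pos lam_pos
        by (simp add: mult_nonneg_nonneg)
      moreover have "FZ / (real l * real m) \<ge> 0" using FZ lm by simp
      ultimately have "FF True True PSS / (real l * real m) - FZ \<ge> - p" by linarith
      then have "r * (FF True True PSS / (real l * real m) - FZ) \<ge> r * (- p)" using r1 by (intro mult_left_mono) auto
      then show ?thesis using ccc unfolding Zc_def by simp
    qed
    moreover have "2 * r * lam - r * lam * D - r * p > 0"
    proof -
      have "2 * r * lam - r * lam * D - r * p = r * p * (3 - 2 * D)" using lam_def by (simp add: algebra_simps)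
      moreover have "r * p * (3 - 2 * D) > 0" using r1 p0 cond1 by simp
      ultimately show ?thesis by simp
    qed
    ultimately show ?thesis by linarith
  next
    assume xx: xx and ccc: "\<not> ccc"
    have sgl: "sg = lam" using xx unfolding sg_def sig_def by simp
    have hcc: "hc ccc = 0" using ccc unfolding hc_def by simp
    have QY: "sg * Q + Y \<ge> 0"
    proof (cases "k \<in> PSS")
      case True
      then have "PSS \<noteq> {}" by blast
      then have "Q \<ge> C" using Qge by simp
      then have "lam * Q \<ge> lam * C" using lam_pos by (intro mult_left_mono) auto
      moreover have "lam * C = 2 * (r * lam * wc)" using C_def by simp
      moreover have "r * lam * wc \<ge> 0" using r1 lam_pos wc_pos by simp
      ultimately show ?thesis using True sgl hcc unfolding Y_def by simp
    next
      case False
      then show ?thesis using Qge sgp C_pos hcc unfolding Y_def by (simp split: if_splits)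
    qed
    moreover have "X \<ge> - r * lam * D"
    proof -
      have "r * lam * ins \<le> r * lam * D" using ins_le r1 lam_pos by (intro mult_left_mono) auto
      then show ?thesis using xx sgl unfolding X_def by simp
    qed
    moreover have "Zc \<ge> (1/4) / (real l * real m)"
    proof -
      have f0: "FZ = p - lam * h" using F0e xx hcc by simp
      have "lam * h < p" using FZ f0 by simp
      then have "h < 1/2" using lam_def p0 by (simp add: field_simps)
      moreover have "lam * h \<ge> 0" using lam_pos hnn by simp
      ultimately have "FF False False PSS - FZ \<ge> 1/4" using f0 p4 hcc unfolding FF_def h_def by (simp add: hc_def)
      then have "(1/4) / (real l * real m) \<le> (FF False False PSS - FZ) / (real l * real m)"
        using lm by (intro divide_right_mono) auto
      then show ?thesis using ccc unfolding Zc_def by simp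
    qed
    moreover have "(1/4) / (real l * real m) - r * lam * D > 0"
    proof -
      have "8 * p * r * D * (real l * real m) < 1" using cond2 by (simp add: mult_ac)
      then have "r * lam * D * (real l * real m) < 1/4" using lam_def by (simp add: algebra_simps)
      then show ?thesis using lm by (simp add: field_simps)
    qed
    ultimately show ?thesis using hcc by simp
  next
    assume xx: "\<not> xx" and ccc: ccc
    have sgl: "sg = 1" using xx unfolding sg_def sig_def by simp
    have hcc: "hc ccc = wc" using ccc unfolding hc_def by simp
    have "sg * Q \<ge> 0" using Qge sgp C_pos by (simp split: if_splits)
    moreover have "X \<ge> 0" using xx sgl g1nn unfolding X_def by simp
    moreover have "Y \<ge> 0" using hcc sgl wc_pos unfolding Y_def by simp
    moreover have "(real l - 1) * (sg * hc ccc) = 2 * r" using lwc hcc sgl by simp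
    moreover have "Zc \<ge> - 3/2 * r"
    proof -
      have f0: "FZ = 1 - (wc + h)" using F0e xx hcc by simp
      have wh: "wc + h < 1" "wc + h \<ge> 0" using FZ f0 wc_pos hnn by auto
      have "FF True True PSS = p - lam * (wc + h)" unfolding FF_def hc_def h_def by simp
      moreover have "lam * (wc + h) \<le> 1/2 * 1" using lam_pos wh by (intro mult_mono) auto
      ultimately have ft: "FF True True PSS \<ge> -1/2" using p0 by simp
      have "FF True True PSS / (real l * real m) \<ge> -1/2"
      proof (cases "FF True True PSS \<ge> 0")
        case True
        then have "0 \<le> FF True True PSS / (real l * real m)" using lm by simp
        then show ?thesis by linarith
      next
        case False
        have "1 / (real l * real m) \<le> 1" using lm by simp
        then have "FF True True PSS * (1 / (real l * real m)) \<ge> FF True True PSS * 1"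
          using False by (intro mult_left_mono_neg) auto
        then have "FF True True PSS / (real l * real m) \<ge> FF True True PSS" by simp
        then show ?thesis using ft by simp
      qed
      moreover have "FZ \<le> 1" using f0 wh by simp
      ultimately have "FF True True PSS / (real l * real m) - FZ \<ge> -3/2" by simp
      then have "r * (FF True True PSS / (real l * real m) - FZ) \<ge> r * (-3/2)" using r1 by (intro mult_left_mono) auto
      then show ?thesis using ccc unfolding Zc_def by simp
    qed
    ultimately show ?thesis using r1 by linarith
  next
    assume xx: "\<not> xx" and ccc: "\<not> ccc"
    have sgl: "sg = 1" using xx unfolding sg_def sig_def by simp
    have hcc: "hc ccc = 0" using ccc unfolding hc_def by simp
    have "Zc = 0" using xx ccc unfolding Zc_def by simp
    moreover have "X \<ge> 0" using xx sgl g1nn unfolding X_def by simp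
    moreover have "Q + Y \<ge> (if PSS = {} then 0 else r * wc)"
    proof (cases "k \<in> PSS")
      case True
      then have ne: "PSS \<noteq> {}" by blast
      then have "Q \<ge> C" using Qge by simp
      moreover have "r * wc \<ge> 0" using r1 wc_pos by simp
      ultimately show ?thesis using True ne sgl hcc C_def unfolding Y_def by simp
    next
      case False
      have "C \<ge> r * wc" using C_def r1 wc_pos by simp
      then show ?thesis using False Qge sgl hcc unfolding Y_def by (simp split: if_splits)
    qed
    moreover have "r * wc > 0" using r1 wc_pos by simp
    ultimately show ?thesis using sgl hcc xx ccc by (cases "PSS = {}") auto
  qed
  show "(\<Sum>v\<in>VV. delta S v) \<ge> 0" using key main by linarith
  assume "S \<noteq> {}"
  moreover have "\<not> xx \<Longrightarrow> \<not> ccc \<Longrightarrow> PSS \<noteq> {}"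
  proof -
    assume "\<not> xx" "\<not> ccc"
    obtain v where "v \<in> S" using \<open>S \<noteq> {}\<close> by auto
    then obtain j where "v = Path i0 j" using S \<open>\<not> xx\<close> \<open>\<not> ccc\<close> unfolding G0_def by auto
    then show "PSS \<noteq> {}" using \<open>v \<in> S\<close> unfolding PP_def by auto
  qed
  ultimately show "(\<Sum>v\<in>VV. delta S v) > 0" using key main by auto
qed

end
end

context mgraph begin

lemma drift_diff:
  "drift_sum V out r S g - g S = (\<Sum>v\<in>V. fitness r S v * ((\<Sum>w\<in>out v. g (newst S v w)) / card (out v) - g S)) / total_fitness V r S"
proof -
  have W: "total_fitness V r S > 0" using W_pos .
  have "(\<Sum>v\<in>V. fitness r S v * ((\<Sum>w\<in>out v. g (newst S v w)) / card (out v) - g S))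
      = (\<Sum>v\<in>V. fitness r S v * ((\<Sum>w\<in>out v. g (newst S v w)) / card (out v))) - total_fitness V r S * g S"
    unfolding total_fitness_def by (simp add: right_diff_distrib sum_subtractf sum_distrib_right)
  moreover have "drift_sum V out r S g = (\<Sum>v\<in>V. fitness r S v * ((\<Sum>w\<in>out v. g (newst S v w)) / card (out v))) / total_fitness V r S"
    unfolding drift_sum_def by (simp add: sum_divide_distrib)
  ultimately show ?thesis using W by (simp add: diff_divide_distrib)
qed

lemma drift_nonneg: assumes "\<And>S. g S \<ge> 0" shows "drift_sum V out r S g \<ge> 0"
  unfolding drift_sum_def
proof (rule sum_nonneg)
  fix v assume "v \<in> V"
  have "fitness r S v / total_fitness V r S \<ge> 0" using fit_pos[of S v] W_pos[of S] by simp
  moreover have "(\<Sum>w\<in>out v. g (newst S v w)) / card (out v) \<ge> 0" using assms by (simp add: sum_nonneg)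
  ultimately show "fitness r S v / total_fitness V r S * ((\<Sum>w\<in>out v. g (newst S v w)) / card (out v)) \<ge> 0"
    by (rule mult_nonneg_nonneg)
qed

end

context sstar begin

lemma phi_x0: "phi {x0} = p"
proof -
  have s: "{x0} \<subseteq> G0" unfolding G0_def by simp
  have pp: "PP {x0} = {}" unfolding PP_def by simp
  have "FF True False {} = p" unfolding FF_def hc_def by (simp add: hr_empty)
  then show ?thesis unfolding phi_def using s pp p0 by simp
qed

theorem sstar_ext: "extinction_prob VV OUTS r x0 \<ge> p"
proof -
  have W: "total_fitness VV r S > 0" for S using mgraph.W_pos[OF mg] .
  have dd: "drift_sum VV OUTS r S phi - phi S = (\<Sum>v\<in>VV. delta S v) / total_fitness VV r S" for S
    unfolding delta_def by (rule mgraph.drift_diff[OF mg])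
  have "phi {x0} \<le> extinction_prob VV OUTS r x0"
  proof (rule mgraph.ext_lower[OF mg x0V])
    show "\<And>S. 0 \<le> phi S" by (rule phi_nonneg)
    show "\<And>S. phi S \<le> 1" by (rule phi_le1)
  next
    fix S assume "S \<subseteq> VV"
    show "phi S \<le> drift_sum VV OUTS r S phi"
    proof (cases "phi S > 0")
      case True
      then have G: "S \<subseteq> G0" "FF (x0 \<in> S) (Centre \<in> S) (PP S) > 0" using phi_pos_G0 by auto
      have "(\<Sum>v\<in>VV. delta S v) \<ge> 0" using drift_pos(1)[OF G] .
      then have "(\<Sum>v\<in>VV. delta S v) / total_fitness VV r S \<ge> 0" using W[of S] by simp
      then show ?thesis using dd[of S] by simp
    next
      case False
      then have "phi S = 0" using phi_nonneg[of S] by simp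
      then show ?thesis using mgraph.drift_nonneg[OF mg phi_nonneg] by simp
    qed
  next
    fix S assume "S \<subseteq> VV" "S \<noteq> {}" "phi S > 0"
    then have G: "S \<subseteq> G0" "FF (x0 \<in> S) (Centre \<in> S) (PP S) > 0" using phi_pos_G0 by auto
    have "(\<Sum>v\<in>VV. delta S v) > 0" using drift_pos(2)[OF G \<open>S \<noteq> {}\<close>] .
    then have "(\<Sum>v\<in>VV. delta S v) / total_fitness VV r S > 0" using W[of S] by simp
    then show "phi S < drift_sum VV OUTS r S phi" using dd[of S] by simp
  qed
  then show ?thesis using phi_x0 by simp
qed

end

lemma arith_main:
  fixes r \<kappa> Lg :: real and k l m :: nat
  assumes r1: "r > 1" and Lg: "Lg \<ge> 1" and k1: "k > 0"
    and kap: "\<kappa> = max (3 * real k) (70 * r ^ 4 * Lg)"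
    and lb: "real l \<ge> 70 * r ^ 4 * \<kappa> * Lg" and mb: "real m \<ge> 6 * r ^ 2 * \<kappa>"
  shows "l \<ge> 2" "m \<ge> 2" "1 / (7 * 70 * r ^ 4 * \<kappa>) > 0" "1 / (7 * 70 * r ^ 4 * \<kappa>) \<le> 1/4"
    "r * (2 * r * (2 * r / (real l - 1))) * real k / (real m - 1) \<le> 1"
    "8 * (1 / (7 * 70 * r ^ 4 * \<kappa>)) * r * (r * (2 * r * (2 * r / (real l - 1))) * real k / (real m - 1)) * real l * real m < 1"
proof -
  have r4: "r ^ 4 \<ge> 1" using r1 by (simp add: one_le_power)
  have r2: "r ^ 2 \<ge> 1" using r1 by (simp add: one_le_power)
  have r43: "r ^ 4 \<ge> r ^ 3" using r1 by (intro power_increasing) auto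
  have K1: "real k \<ge> 1" using k1 by simp
  have kap3: "\<kappa> \<ge> 3 * real k" using kap by simp
  have kap70: "\<kappa> \<ge> 70" 
  proof -
    have "70 * r ^ 4 * Lg \<ge> 70 * 1 * 1" using r4 Lg by (intro mult_mono) auto
    then show ?thesis using kap by simp
  qed
  have kpos: "\<kappa> > 0" using kap70 by simp
  have L: "real l \<ge> 70 * \<kappa>"
  proof -
    have "70 * r ^ 4 * \<kappa> * Lg \<ge> 70 * 1 * \<kappa> * 1" using r4 Lg kpos by (intro mult_mono) auto
    then show ?thesis using lb by simp
  qed
  have Lr: "real l \<ge> 70 * r ^ 3 * \<kappa>"
  proof -
    have "70 * r ^ 4 * \<kappa> * Lg \<ge> 70 * r ^ 3 * \<kappa> * 1" using r43 Lg kpos r1 by (intro mult_mono) auto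
    then show ?thesis using lb by simp
  qed
  have M: "real m \<ge> 6 * \<kappa>"
  proof -
    have "6 * r ^ 2 * \<kappa> \<ge> 6 * 1 * \<kappa>" using r2 kpos by (intro mult_mono) auto
    then show ?thesis using mb by simp
  qed
  show l2: "l \<ge> 2" using L kap70 by simp
  show m2: "m \<ge> 2" using M kap70 by simp
  have den: "7 * 70 * r ^ 4 * \<kappa> \<ge> 4"
  proof -
    have "7 * 70 * r ^ 4 * \<kappa> \<ge> 7 * 70 * 1 * 70" using r4 kap70 by (intro mult_mono) auto
    then show ?thesis by simp
  qed
  show "1 / (7 * 70 * r ^ 4 * \<kappa>) > 0" using den by simp
  show "1 / (7 * 70 * r ^ 4 * \<kappa>) \<le> 1/4" using den by (simp add: field_simps)
  have L1: "real l - 1 > 0" "real m - 1 > 0" using l2 m2 by auto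
  have Deq: "r * (2 * r * (2 * r / (real l - 1))) * real k / (real m - 1) = 4 * r ^ 3 * real k / ((real l - 1) * (real m - 1))"
    using L1 by (simp add: field_simps power3_eq_cube)
  have Lk: "real l - 1 \<ge> 4 * r ^ 3 * real k"
  proof -
    have "real l - 1 \<ge> real l / 2" using l2 by simp
    moreover have "70 * r ^ 3 * \<kappa> \<ge> 70 * r ^ 3 * (3 * real k)" using kap3 r1 by (intro mult_left_mono) auto
    moreover have "r ^ 3 * real k \<ge> 0" using r1 by simp
    ultimately show ?thesis using Lr by linarith
  qed
  have "4 * r ^ 3 * real k \<le> (real l - 1) * (real m - 1)"
  proof -
    have "(real l - 1) * 1 \<le> (real l - 1) * (real m - 1)" using L1 m2 by (intro mult_left_mono) auto
    then show ?thesis using Lk by simp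
  qed
  then show "r * (2 * r * (2 * r / (real l - 1))) * real k / (real m - 1) \<le> 1"
    unfolding Deq using L1 by (simp add: divide_le_eq_1)
  define P where "P = (real l - 1) * (real m - 1)"
  have Ppos: "P > 0" unfolding P_def using L1 by simp
  have LM: "real l * real m \<le> 4 * P"
  proof -
    have "real l \<le> 2 * (real l - 1)" "real m \<le> 2 * (real m - 1)" using l2 m2 by auto
    then have "real l * real m \<le> (2 * (real l - 1)) * (2 * (real m - 1))" by (intro mult_mono) auto
    then show ?thesis unfolding P_def by (simp add: algebra_simps)
  qed
  have eq2: "8 * (1 / (7 * 70 * r ^ 4 * \<kappa>)) * r * (r * (2 * r * (2 * r / (real l - 1))) * real k / (real m - 1)) * real l * real m
      = 16 * real k * (real l * real m) / (245 * \<kappa> * P)"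
    unfolding P_def using L1 kpos r1 by (simp add: field_simps power3_eq_cube power4_eq_xxxx)
  have "16 * real k * (real l * real m) \<le> 16 * real k * (4 * P)" using LM K1 by (intro mult_left_mono) auto
  also have "\<dots> < 245 * (3 * real k) * P" using K1 Ppos by simp
  also have "\<dots> \<le> 245 * \<kappa> * P" using kap3 Ppos by (intro mult_right_mono) auto
  finally have "16 * real k * (real l * real m) < 245 * \<kappa> * P" .
  then show "8 * (1 / (7 * 70 * r ^ 4 * \<kappa>)) * r * (r * (2 * r * (2 * r / (real l - 1))) * real k / (real m - 1)) * real l * real m < 1"
    unfolding eq2 using kpos Ppos by simp
qed

theorem lemma4p5:
  fixes r :: real
  assumes "r > 1"
  shows "\<exists>n0::nat. \<forall>(k::nat) (l::nat) (m::nat) (n::nat) (\<kappa>::real) x0.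
           k > 0 \<longrightarrow> l > 0 \<longrightarrow> m > 0 \<longrightarrow>
           n = l * (k + m) + 1 \<longrightarrow>
           \<kappa> = max (3 * real k) (70 * r ^ 4 * ln (real n)) \<longrightarrow>
           real l \<ge> 70 * r ^ 4 * \<kappa> * ln (real n) \<longrightarrow>
           real m \<ge> 6 * r ^ 2 * \<kappa> \<longrightarrow>
           n \<ge> n0 \<longrightarrow>
           x0 \<in> reservoirs l m \<longrightarrow>
           extinction_prob (superstar_V k l m) (superstar_out k l m) r x0
             \<ge> 1 / (7 * 70 * r ^ 4 * \<kappa>)"
proof (rule exI[of _ 3], intro allI impI)
  fix k l m n :: nat and \<kappa> :: real and x0
  assume k0: "k > 0" and "l > 0" "m > 0" "n = l * (k + m) + 1"
    and kap: "\<kappa> = max (3 * real k) (70 * r ^ 4 * ln (real n))"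
    and lb: "real l \<ge> 70 * r ^ 4 * \<kappa> * ln (real n)"
    and mb: "real m \<ge> 6 * r ^ 2 * \<kappa>"
    and n3: "n \<ge> 3" and x0: "x0 \<in> reservoirs l m"
  have Lg: "ln (real n) \<ge> 1"
  proof -
    have "exp 1 \<le> real n" using e_less_272 n3 by linarith
    then show ?thesis using n3 by (subst ln_ge_iff) auto
  qed
  note ar = arith_main[OF assms Lg k0 kap lb mb]
  obtain i0 a0 where x: "x0 = Res i0 a0" "i0 \<in> {1..l}" "a0 \<in> {1..m}"
    using x0 unfolding reservoirs_def by auto
  define p where "p = 1 / (7 * 70 * r ^ 4 * \<kappa>)"
  define wc where "wc = 2 * r / (real l - 1)"
  define C where "C = 2 * r * wc"
  define E where "E = C / (real m - 1)"
  define D where "D = r * C * real k / (real m - 1)"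
  define lam where "lam = 2 * p"
  interpret s: sstar k l m r p wc C E D lam i0 a0
  proof unfold_locales
    show "1 \<le> k" using k0 by simp
    show "2 \<le> l" "2 \<le> m" using ar by auto
    show "1 < r" using assms .
    show "i0 \<in> {1..l}" "a0 \<in> {1..m}" using x by auto
    show "0 < p" "p \<le> 1/4" unfolding p_def using ar by auto
    show "wc = 2 * r / (real l - 1)" "C = 2 * r * wc" "E = C / (real m - 1)"
      "D = r * C * real k / (real m - 1)" "lam = 2 * p"
      unfolding wc_def C_def E_def D_def lam_def by simp_all
    show "D \<le> 1" unfolding D_def C_def wc_def using ar(5) .
    show "8 * p * r * D * real l * real m < 1" unfolding D_def C_def wc_def p_def using ar(6) .
  qed
  show "extinction_prob (superstar_V k l m) (superstar_out k l m) r x0 \<ge> 1 / (7 * 70 * r ^ 4 * \<kappa>)"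
    using s.sstar_ext x(1) unfolding p_def by simp
qed

end
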